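(* Let $d>1$ be a square-free integer, $F=\mathbf Q(\sqrt d)$, and let $(V,h,\psi)$ be a Hodge structure of K3 type with $\mathrm{End}_{Hod}(V)=F$ and $m=\dim_F V$ odd. Then $a=d+\sqrt d$ is totally positive, and the quadratic spaces $(V,\psi)$ and $(V,\psi_a)$, where $\psi_a(v,w)=\psi(av,w)$, are not isometric over $\mathbf Q$.
   Context: A Hodge structure of K3 type is a simple polarized rational weight two Hodge structure with $\dim V^{2,0}=1$; $\mathrm{End}_{Hod}(V)$ is the algebra of endomorphisms of the Hodge structure. An element of a totally real field is totally positive if all its real embeddings are positive. *)

theory Defs
  imports "HOL-Analysis.Analysis" "HOL-Computational_Algebra.Squarefree"
begin

text \<open>V is modelled as rat^'n (a finite-dimensional Q-vector space with a basis),
  V_C = complex^'n, a Q-bilinear form psi is given by its Gram matrix B.\<close>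

definition bilin :: "'a::comm_ring_1^'n^'n \<Rightarrow> 'a^'n \<Rightarrow> 'a^'n \<Rightarrow> 'a" where
  "bilin B v w = (\<Sum>i\<in>UNIV. \<Sum>j\<in>UNIV. v$i * B$i$j * w$j)"

definition cvec :: "rat^'n \<Rightarrow> complex^'n" where
  "cvec v = (\<chi> i. of_rat (v$i))"

definition cmat :: "rat^'n^'m \<Rightarrow> complex^'n^'m" where
  "cmat M = (\<chi> i j. of_rat (M$i$j))"

definition cconj :: "complex^'n \<Rightarrow> complex^'n" where
  "cconj v = (\<chi> i. cnj (v$i))"

definition complex_subspace :: "(complex^'n) set \<Rightarrow> bool" where
  "complex_subspace S \<longleftrightarrow> 0 \<in> S \<and> (\<forall>x\<in>S. \<forall>y\<in>S. x + y \<in> S) \<and> (\<forall>c x. x \<in> S \<longrightarrow> c *s x \<in> S)"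

definition cspan :: "(complex^'n) set \<Rightarrow> (complex^'n) set" where
  "cspan S = \<Inter>{T. complex_subspace T \<and> S \<subseteq> T}"

definition rat_subspace :: "(rat^'n) set \<Rightarrow> bool" where
  "rat_subspace W \<longleftrightarrow> 0 \<in> W \<and> (\<forall>x\<in>W. \<forall>y\<in>W. x + y \<in> W) \<and> (\<forall>c x. x \<in> W \<longrightarrow> c *s x \<in> W)"

definition hodge_weight2 :: "(complex^'n) set \<Rightarrow> (complex^'n) set \<Rightarrow> (complex^'n) set \<Rightarrow> bool" where
  "hodge_weight2 H20 H11 H02 \<longleftrightarrow>
     complex_subspace H20 \<and> complex_subspace H11 \<and> complex_subspace H02 \<and>
     (\<forall>v. \<exists>!(x,y,z). x \<in> H20 \<and> y \<in> H11 \<and> z \<in> H02 \<and> v = x + y + z) \<and>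
     H02 = cconj ` H20 \<and> cconj ` H11 = H11"

definition polarization :: "rat^'n^'n \<Rightarrow> (complex^'n) set \<Rightarrow> (complex^'n) set \<Rightarrow> (complex^'n) set \<Rightarrow> bool" where
  "polarization B H20 H11 H02 \<longleftrightarrow>
     transpose B = B \<and>
     (\<forall>x\<in>H20. \<forall>y\<in>H20 \<union> H11. bilin (cmat B) x y = 0) \<and>
     (\<forall>x\<in>H02. \<forall>y\<in>H02 \<union> H11. bilin (cmat B) x y = 0) \<and>
     (\<forall>x\<in>H20. x \<noteq> 0 \<longrightarrow> Re (bilin (cmat B) x (cconj x)) > 0) \<and>
     (\<forall>x\<in>H11. x \<noteq> 0 \<longrightarrow> Re (bilin (cmat B) x (cconj x)) < 0)"

definition sub_hodge :: "(complex^'n) set \<Rightarrow> (complex^'n) set \<Rightarrow> (complex^'n) set \<Rightarrow> (rat^'n) set \<Rightarrow> bool" where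
  "sub_hodge H20 H11 H02 W \<longleftrightarrow> rat_subspace W \<and>
     (\<forall>v\<in>cspan (cvec ` W). \<exists>x\<in>cspan (cvec ` W) \<inter> H20. \<exists>y\<in>cspan (cvec ` W) \<inter> H11.
        \<exists>z\<in>cspan (cvec ` W) \<inter> H02. v = x + y + z)"

definition simple_hodge :: "(complex^'n) set \<Rightarrow> (complex^'n) set \<Rightarrow> (complex^'n) set \<Rightarrow> bool" where
  "simple_hodge H20 H11 H02 \<longleftrightarrow> (\<forall>W. sub_hodge H20 H11 H02 W \<longrightarrow> W = {0} \<or> W = UNIV)"

definition K3_type :: "rat^'n^'n \<Rightarrow> (complex^'n) set \<Rightarrow> (complex^'n) set \<Rightarrow> (complex^'n) set \<Rightarrow> bool" where
  "K3_type B H20 H11 H02 \<longleftrightarrow> hodge_weight2 H20 H11 H02 \<and> polarization B H20 H11 H02 \<and>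
     simple_hodge H20 H11 H02 \<and> (\<exists>\<omega>. \<omega> \<noteq> 0 \<and> H20 = {c *s \<omega> | c. True})"

definition hodge_endo :: "(complex^'n) set \<Rightarrow> (complex^'n) set \<Rightarrow> (complex^'n) set \<Rightarrow> rat^'n^'n \<Rightarrow> bool" where
  "hodge_endo H20 H11 H02 M \<longleftrightarrow>
     (\<forall>x\<in>H20. cmat M *v x \<in> H20) \<and> (\<forall>x\<in>H11. cmat M *v x \<in> H11) \<and> (\<forall>x\<in>H02. cmat M *v x \<in> H02)"

definition quad_field :: "int \<Rightarrow> real set" where
  "quad_field d = {of_rat p + of_rat q * sqrt (of_int d) | p q. True}"

definition real_embedding :: "int \<Rightarrow> (real \<Rightarrow> real) \<Rightarrow> bool" where
  "real_embedding d \<sigma> \<longleftrightarrow> \<sigma> 1 = 1 \<and>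
     (\<forall>x\<in>quad_field d. \<forall>y\<in>quad_field d. \<sigma> (x + y) = \<sigma> x + \<sigma> y \<and> \<sigma> (x * y) = \<sigma> x * \<sigma> y)"

definition totally_positive :: "int \<Rightarrow> real \<Rightarrow> bool" where
  "totally_positive d x \<longleftrightarrow> x \<in> quad_field d \<and> (\<forall>\<sigma>. real_embedding d \<sigma> \<longrightarrow> \<sigma> x > 0)"

end

theory Submission
  imports Defs "HOL-Computational_Algebra.Computational_Algebra" "HOL-Computational_Algebra.Field_as_Ring"
begin


lemma rat_sq_int:
  fixes r :: rat and n :: int
  assumes "r^2 = of_int n"
  shows "\<exists>m::int. n = m^2"
proof -
  obtain a b where ab: "quotient_of r = (a, b)" by (cases "quotient_of r") auto
  have b0: "b > 0" using quotient_of_denom_pos[OF ab] .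
  have cop: "coprime a b" using quotient_of_coprime[OF ab] .
  have r: "r = of_int a / of_int b" using quotient_of_div[OF ab] .
  have "of_int a ^ 2 = (of_int n * of_int b ^ 2 :: rat)"
    using assms b0 unfolding r by (simp add: power_divide field_simps)
  hence e: "a^2 = n * b^2"
    by (metis of_int_eq_iff of_int_mult of_int_power)
  hence "b^2 dvd a^2" by simp
  moreover have "coprime (b^2) (a^2)" using cop by (simp add: coprime_commute)
  ultimately have "is_unit (b^2)" using coprime_common_divisor[of "b^2" "a^2" "b^2"] by simp
  hence "\<bar>b^2\<bar> = 1" by simp
  hence "b^2 = 1" by simp
  thus ?thesis using e by auto
qed

lemma sqfree_not_sq:
  fixes d :: int assumes "d > 1" "squarefree d" shows "\<not> (\<exists>m. d = m^2)"
proof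
  assume "\<exists>m. d = m^2" then obtain m where m: "d = m^2" by blast
  hence "m^2 dvd d" by simp
  hence "is_unit m" using assms(2) unfolding squarefree_def by blast
  hence "\<bar>m\<bar> = 1" by simp
  hence "m^2 = 1" by (metis power2_abs power_one)
  thus False using m assms by simp
qed

lemma dd1_not_sq:
  fixes d :: int assumes "d > 1" shows "\<not> (\<exists>m. d*(d-1) = m^2)"
proof
  assume "\<exists>m. d*(d-1) = m^2" then obtain m where m: "d*(d-1) = m^2" by blast
  define k where "k = \<bar>m\<bar>"
  have k: "d*(d-1) = k^2" "k \<ge> 0" using m by (auto simp: k_def)
  show False
  proof (cases "k \<le> d - 1")
    case True
    hence "k^2 \<le> (d-1)^2" using k(2) by (simp add: power_mono)
    thus False using k assms by (simp add: power2_eq_square algebra_simps)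
  next
    case False
    hence "d^2 \<le> k^2" using assms by (simp add: power_mono)
    thus False using k assms by (simp add: power2_eq_square algebra_simps)
  qed
qed



lemma tp_part:
  fixes d :: int assumes d1: "d > 1"
  shows "totally_positive d (of_int d + sqrt (of_int d))"
  unfolding totally_positive_def
proof (intro conjI allI impI)
  have mem: "of_rat p + of_rat q * sqrt (of_int d) \<in> quad_field d" for p q
    unfolding quad_field_def by blast
  have "of_int d + sqrt (of_int d) = of_rat (of_int d) + of_rat 1 * sqrt (of_int d)"
    by simp
  thus "of_int d + sqrt (of_int d) \<in> quad_field d" using mem by metis
  fix \<sigma> assume e: "real_embedding d \<sigma>"
  have add: "\<sigma> (x + y) = \<sigma> x + \<sigma> y" and mul: "\<sigma> (x * y) = \<sigma> x * \<sigma> y"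
    if "x \<in> quad_field d" "y \<in> quad_field d" for x y
    using e that unfolding real_embedding_def by auto
  have s1: "\<sigma> 1 = 1" using e unfolding real_embedding_def by auto
  have memr: "of_rat p \<in> quad_field d" for p using mem[of p 0] by simp
  have nat: "\<sigma> (of_nat k) = of_nat k" for k
  proof (induction k)
    case 0
    have "\<sigma> (0 + 0) = \<sigma> 0 + \<sigma> 0" using add[OF memr[of 0] memr[of 0]] by simp
    then show ?case by simp
  next
    case (Suc k)
    have "\<sigma> (of_nat k + 1) = \<sigma> (of_nat k) + \<sigma> 1"
      using add[OF memr[of "of_nat k"] memr[of 1]] by simp
    then show ?case using Suc s1 by (simp add: add.commute)
  qed
  have dnat: "(of_int d :: real) = of_nat (nat d)" using d1 by simp
  have sd: "\<sigma> (of_int d) = of_int d" by (simp only: dnat nat)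
  have msq: "sqrt (of_int d) \<in> quad_field d" using mem[of 0 1] by simp
  have mdd: "(of_int d :: real) \<in> quad_field d" using memr[of "of_int d"] by simp
  have "\<sigma> (sqrt (of_int d)) ^ 2 = of_int d"
    using mul[OF msq msq] d1 sd by (simp add: power2_eq_square)
  hence "\<bar>\<sigma> (sqrt (of_int d))\<bar> = sqrt (of_int d)"
    by (metis real_sqrt_abs)
  moreover have "sqrt (of_int d) < (of_int d :: real)"
  proof -
    have "(of_int d::real) < of_int d * of_int d" using d1 by simp
    hence "sqrt (of_int d) < sqrt (of_int d * of_int d :: real)" by (simp only: real_sqrt_less_iff)
    thus ?thesis using d1 by simp
  qed
  moreover have "\<sigma> (of_int d + sqrt (of_int d)) = of_int d + \<sigma> (sqrt (of_int d))"
    using add[OF mdd msq] sd by simp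
  ultimately show "\<sigma> (of_int d + sqrt (of_int d)) > 0" by linarith
qed



lemma bilin_alt: "bilin B v w = (\<Sum>i\<in>UNIV. v$i * (B *v w)$i)"
  unfolding bilin_def matrix_vector_mult_def by (simp add: sum_distrib_left mult.assoc)

lemma dot_transp:
  fixes M :: "'a::comm_ring_1^'n^'n"
  shows "(\<Sum>i\<in>UNIV. (M *v x)$i * y$i) = (\<Sum>i\<in>UNIV. x$i * (transpose M *v y)$i)"
proof -
  have L: "(\<Sum>i\<in>UNIV. (M *v x)$i * y$i) = (\<Sum>i\<in>UNIV. \<Sum>j\<in>UNIV. M$i$j * x$j * y$i)"
    by (simp add: matrix_vector_mult_def sum_distrib_right)
  have R: "(\<Sum>i\<in>UNIV. x$i * (transpose M *v y)$i) = (\<Sum>i\<in>UNIV. \<Sum>j\<in>UNIV. x$i * M$j$i * y$j)"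
    by (simp add: matrix_vector_mult_def transpose_def sum_distrib_left mult.assoc)
  have S: "(\<Sum>i\<in>UNIV. \<Sum>j\<in>UNIV. x$i * M$j$i * y$j) = (\<Sum>j\<in>UNIV. \<Sum>i\<in>UNIV. x$i * M$j$i * y$j)"
    by (rule sum.swap)
  have T: "(\<Sum>j\<in>UNIV. \<Sum>i\<in>UNIV. x$i * M$j$i * y$j) = (\<Sum>i\<in>UNIV. \<Sum>j\<in>UNIV. M$i$j * x$j * y$i)"
    by (simp add: mult_ac)
  show ?thesis unfolding L R S T ..
qed

lemma bilin_mv:
  fixes B M N :: "'a::comm_ring_1^'n^'n"
  shows "bilin B (M *v x) (N *v y) = bilin (transpose M ** B ** N) x y"
proof -
  have "bilin B (M *v x) (N *v y) = (\<Sum>i\<in>UNIV. (M *v x)$i * (B *v (N *v y))$i)"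
    by (rule bilin_alt)
  also have "\<dots> = (\<Sum>i\<in>UNIV. x$i * (transpose M *v (B *v (N *v y)))$i)"
    by (rule dot_transp)
  also have "\<dots> = bilin (transpose M ** B ** N) x y"
    by (simp add: bilin_alt matrix_vector_mul_assoc matrix_mul_assoc)
  finally show ?thesis .
qed

lemma bilin_axis: "bilin (M::'a::comm_ring_1^'n^'n) (axis i 1) (axis j 1) = M$i$j"
proof -
  have e: "(axis i 1)$a * M$a$b * (axis j 1)$b = (if a = i then (if b = j then M$a$b else 0) else 0)" for a b
    by (simp add: axis_def)
  have "bilin M (axis i 1) (axis j 1) = (\<Sum>a\<in>UNIV. if a = i then (\<Sum>b\<in>UNIV. if b = j then M$a$b else 0) else 0)"
    unfolding bilin_def e by (rule sum.cong[OF refl]) simp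
  also have "\<dots> = M$i$j" by simp
  finally show ?thesis .
qed

lemma bilin_eq_mat:
  fixes M N :: "'a::comm_ring_1^'n^'n"
  assumes "\<forall>v w. bilin M v w = bilin N v w" shows "M = N"
  using assms bilin_axis by (metis vec_eq_iff)

lemma det_mat: "det (mat c :: 'a::comm_ring_1^'n^'n) = c ^ CARD('n)"
  by (simp add: det_diagonal mat_def)

lemma poly_det: "poly (det (M :: 'a::comm_ring_1 poly^'n^'n)) t = det (\<chi> i j. poly (M$i$j) t)"
  unfolding det_def by (simp add: poly_sum poly_prod)

lemma mat_mul_l: "(mat c ** (A::'a::comm_ring_1^'n^'n))$i$j = c * A$i$j"
  unfolding matrix_matrix_mult_def mat_def
  by (auto simp: if_distrib if_distribR sum.delta'[OF finite] sum.delta[OF finite] cong: if_cong)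

lemma mat_mul_r: "((A::'a::comm_ring_1^'n^'n) ** mat c)$i$j = A$i$j * c"
  unfolding matrix_matrix_mult_def mat_def
  by (auto simp: if_distrib if_distribR sum.delta'[OF finite] sum.delta[OF finite] cong: if_cong)

lemma distr4: "(((A::'a::comm_ring_1^'n^'n) + B) ** (C - D))$i$j = (A**C)$i$j - (A**D)$i$j + (B**C)$i$j - (B**D)$i$j"
  unfolding matrix_matrix_mult_def by (simp add: algebra_simps sum.distrib sum_subtractf)

lemma distr2: "(((A::'a::comm_ring_1^'n^'n)) ** (C + D))$i$j = (A**C)$i$j + (A**D)$i$j"
  unfolding matrix_matrix_mult_def by (simp add: algebra_simps sum.distrib)

lemma sq_mat:
  fixes J :: "'a::comm_ring_1^'n^'n"
  assumes "J ** J = mat c"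
  shows "(mat t + J) ** (mat t - J) = mat (t*t - c)"
proof -
  have "((mat t + J) ** (mat t - J))$i$j = (mat (t*t - c))$i$j" for i j
    using assms by (simp add: distr4 mat_mul_l mat_mul_r) (simp add: mat_def algebra_simps)
  thus ?thesis by (simp add: vec_eq_iff)
qed

lemma neg_mat:
  fixes J :: "'a::comm_ring_1^'n^'n"
  shows "mat t - J = mat (-1) ** (mat (-t) + J)"
proof -
  have "(mat t - J)$i$j = (mat (-1) ** (mat (-t) + J))$i$j" for i j
    by (simp add: distr2 mat_mul_l) (simp add: mat_def)
  thus ?thesis by (simp add: vec_eq_iff)
qed



lemma irred_quad:
  fixes d :: int
  assumes nsq: "\<not> (\<exists>r::rat. r^2 = of_int d)"
  shows "prime ([:- of_int d, 0, 1:] :: rat poly)"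
proof -
  let ?p = "[:- of_int d, 0, 1:] :: rat poly"
  have dp: "degree ?p = 2" by simp
  have "irreducible ?p"
  proof (rule irreducibleI)
    show "?p \<noteq> 0" by simp
    show "\<not> is_unit ?p" using is_unit_iff_degree[of ?p] by simp
    fix a b assume ab: "?p = a * b"
    show "is_unit a \<or> is_unit b"
    proof (rule ccontr)
      assume nu: "\<not> (is_unit a \<or> is_unit b)"
      have a0: "a \<noteq> 0" and b0: "b \<noteq> 0" using ab by auto
      have da: "degree a \<noteq> 0" using nu is_unit_iff_degree[OF a0] by auto
      have db: "degree b \<noteq> 0" using nu is_unit_iff_degree[OF b0] by auto
      have "degree a + degree b = 2" using ab degree_mult_eq[OF a0 b0] dp by simp
      hence "degree a = 1" using da db by linarith
      then obtain u v where a: "a = [:v, u:]" "u \<noteq> 0" by (rule degree1_coeffs)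
      define r where "r = - v / u"
      have "poly a r = 0" using a by (simp add: r_def)
      hence "poly ?p r = 0" using ab by simp
      hence "r^2 = of_int d" by (simp add: power2_eq_square algebra_simps)
      thus False using nsq by blast
    qed
  qed
  hence "prime_elem ?p" by (rule field_poly_irreducible_imp_prime)
  moreover have "normalize ?p = ?p"
    by (simp add: normalize_poly_eq_map_poly)
  ultimately show ?thesis unfolding prime_def by (rule conjI)
qed



lemma det_shape:
  fixes J :: "rat^'n^'n" and d :: int
  assumes JJ: "J ** J = mat (of_int d)" and nsq: "\<not> (\<exists>r::rat. r^2 = of_int d)"
  shows "\<exists>m c. CARD('n) = 2*m \<and> c*c = 1 \<and> (\<forall>t. det (mat t + J) = c * (t*t - of_int d)^m)"
proof -
  define n where "n = CARD('n)"
  define PM :: "rat poly^'n^'n" where "PM = (\<chi> i j. [:J$i$j, if i = j then 1 else 0:])"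
  define F where "F = det PM"
  define p :: "rat poly" where "p = [:- of_int d, 0, 1:]"
  have pp: "prime p" unfolding p_def by (rule irred_quad[OF nsq])
  have p0: "p \<noteq> 0" and dp: "degree p = 2" by (simp_all add: p_def)
  have polyp: "poly p t = t*t - of_int d" for t by (simp add: p_def algebra_simps)
  have evF: "poly F t = det (mat t + J)" for t
  proof -
    have "(\<chi> i j. poly (PM$i$j) t) = mat t + J"
      by (simp add: PM_def vec_eq_iff mat_def)
    thus ?thesis unfolding F_def poly_det by simp
  qed
  have prodt: "det (mat t + J) * ((-1)^n * det (mat (-t) + J)) = (t*t - of_int d)^n" for t
  proof -
    have "det (mat t + J) * det (mat t - J) = (t*t - of_int d)^n"
      using sq_mat[OF JJ, of t] det_mul[of "mat t + J" "mat t - J"] det_mat n_def by metis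
    moreover have "det (mat t - J) = (-1)^n * det (mat (-t) + J)"
      using neg_mat[of t J] det_mul[of "mat (-1)" "mat (-t) + J"] det_mat n_def by metis
    ultimately show ?thesis by simp
  qed
  define G where "G = smult ((-1)^n) (pcompose F [:0,-1:])"
  have "poly (F * G) = poly (p^n)"
  proof
    fix t show "poly (F * G) t = poly (p^n) t"
    proof -
      have q: "poly [:0,-1:] t = -t" by simp
      show ?thesis using prodt[of t] by (simp only: poly_mult G_def poly_smult poly_pcompose q evF poly_power polyp)
    qed
  qed
  hence FG: "F * G = p^n" by (rule poly_eq_poly_eq_iff[THEN iffD1])
  have Fd: "F dvd p^n" unfolding FG[symmetric] by simp
  obtain m where "m \<le> n" and nF: "normalize F = p^m" by (rule divides_primepow[OF pp Fd])
  have F0: "F \<noteq> 0" using FG p0 by auto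
  have "is_unit (unit_factor F)" using F0 by simp
  from is_unit_poly_iff[THEN iffD1, OF this] obtain c where uc: "unit_factor F = [:c:]" and "c dvd 1" by blast
  hence c0: "c \<noteq> 0" by auto
  have Fc: "F = p^m * [:c:]"
    using normalize_mult_unit_factor[of F] unfolding nF uc by simp
  have evF2: "det (mat t + J) = c * (t*t - of_int d)^m" for t
    using evF[of t] Fc by (simp add: polyp)
  have "poly (smult (c*c*(-1)^n) (p^(2*m))) = poly (p^n)"
  proof
    fix t
    have "c * (t*t - of_int d)^m * ((-1)^n * (c * ((-t)*(-t) - of_int d)^m)) = (t*t - of_int d)^n"
      using prodt[of t] by (simp only: evF2)
    hence X: "c * (t*t - of_int d)^m * ((-1)^n * (c * (t*t - of_int d)^m)) = (t*t - of_int d)^n"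
      by (simp only: minus_mult_minus)
    have e1: "poly (smult (c*c*(-1)^n) (p^(2*m))) t = c*c*(-1)^n * ((t*t - of_int d)^m * (t*t - of_int d)^m)"
      by (simp only: poly_smult poly_power poly_mult polyp mult_2 power_add)
    have e2: "c*c*(-1)^n * ((t*t - of_int d)^m * (t*t - of_int d)^m) = c * (t*t - of_int d)^m * ((-1)^n * (c * (t*t - of_int d)^m))"
      by (simp only: mult.commute mult.left_commute mult.assoc)
    have e3: "poly (p^n) t = (t*t - of_int d)^n" by (simp only: poly_power polyp)
    show "poly (smult (c*c*(-1)^n) (p^(2*m))) t = poly (p^n) t"
      unfolding e1 e2 e3 X ..
  qed
  hence eqp: "smult (c*c*(-1)^n) (p^(2*m)) = p^n" by (rule poly_eq_poly_eq_iff[THEN iffD1])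
  have "c*c*(-1)^n \<noteq> 0" using c0 by simp
  hence "degree (p^(2*m)) = degree (p^n)" using eqp degree_smult_eq[of "c*c*(-1)^n" "p^(2*m)"] by simp
  hence "2*m*2 = n*2" using degree_power_eq[OF p0, of "2*m"] degree_power_eq[OF p0, of n] dp by simp
  hence n2: "n = 2*m" by simp
  have "poly (smult (c*c*(-1)^n) (p^(2*m))) 0 = poly (p^n) 0" by (simp only: eqp)
  moreover have pz: "poly p 0 = - of_int d" by (simp add: p_def)
  ultimately have Y: "c*c*(-1)^n * (- of_int d)^(2*m) = (- of_int d)^n" by (simp only: poly_smult poly_power pz)
  have "(of_int d :: rat) \<noteq> 0"
  proof
    assume "(of_int d :: rat) = 0" hence "(0::rat)^2 = of_int d" by simp
    thus False using nsq by blast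
  qed
  hence dz: "(- of_int d :: rat)^(2*m) \<noteq> 0" by simp
  have m1: "(-1::rat)^(2*m) = 1" by (simp add: power_mult)
  have "c*c*(-1)^(2*m) * (- of_int d)^(2*m) = 1 * (- of_int d)^(2*m)" using Y unfolding n2 by (simp only: mult_1_left)
  hence "c*c * (- of_int d)^(2*m) = 1 * (- of_int d)^(2*m)" unfolding m1 by (simp only: mult_1_right)
  hence cc: "c*c = 1" using dz mult_right_cancel[of "(- of_int d :: rat)^(2*m)" "c*c" 1] by blast
  have cn: "CARD('n) = 2*m" using n2 n_def by simp
  have "CARD('n) = 2*m \<and> c*c = 1 \<and> (\<forall>t. det (mat t + J) = c * (t*t - of_int d)^m)"
    using cn cc evF2 by blast
  thus ?thesis by blast
qed



lemma bilin_sym: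
  fixes C :: "'a::comm_ring_1^'n^'n"
  assumes "transpose C = C" shows "bilin C a b = bilin C b a"
proof -
  have Cs: "C$i$j = C$j$i" for i j using assms by (metis transpose_def vec_lambda_beta)
  have "bilin C a b = (\<Sum>i\<in>UNIV. \<Sum>j\<in>UNIV. a$i * C$i$j * b$j)" by (simp add: bilin_def)
  also have "\<dots> = (\<Sum>j\<in>UNIV. \<Sum>i\<in>UNIV. a$i * C$i$j * b$j)" by (rule sum.swap)
  also have "\<dots> = bilin C b a" unfolding bilin_def using Cs by (simp add: mult_ac)
  finally show ?thesis .
qed

lemma bilin_add3:
  "bilin (C::'a::comm_ring_1^'n^'n) (x + y + z) w = bilin C x w + bilin C y w + bilin C z w"
  unfolding bilin_def by (simp add: algebra_simps sum.distrib)

lemma cconj_cconj [simp]: "cconj (cconj x) = x"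
  by (simp add: cconj_def vec_eq_iff)

lemma cconj_0 [simp]: "cconj 0 = 0"
  by (simp add: cconj_def vec_eq_iff)

lemma K3_det:
  fixes B :: "rat^'n^'n"
  assumes K: "K3_type B H20 H11 H02" shows "det B \<noteq> 0"
proof
  assume "det B = 0"
  hence "\<not> invertible B" by (simp add: invertible_det_nz)
  hence "\<not> (\<forall>x. B *v x = 0 \<longrightarrow> x = 0)"
    by (simp add: invertible_left_inverse matrix_left_invertible_ker)
  then obtain v where Bv: "B *v v = 0" and v0: "v \<noteq> 0" by blast
  have hw: "hodge_weight2 H20 H11 H02" and pol: "polarization B H20 H11 H02"
    using K unfolding K3_type_def by auto
  let ?C = "cmat B"
  let ?u = "cvec v"
  have tB: "transpose B = B" using pol unfolding polarization_def by auto
  have tC: "transpose ?C = ?C"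
  proof -
    have "B$j$i = B$i$j" for i j using tB by (metis transpose_def vec_lambda_beta)
    thus ?thesis by (simp add: transpose_def cmat_def vec_eq_iff)
  qed
  have Cu: "?C *v ?u = 0"
  proof -
    have "(?C *v ?u)$i = of_rat ((B *v v)$i)" for i
      by (simp add: matrix_vector_mult_def cmat_def cvec_def of_rat_mult of_rat_sum)
    thus ?thesis using Bv by (simp add: vec_eq_iff)
  qed
  have bz: "bilin ?C ?u w = 0" for w
  proof -
    have "bilin ?C ?u w = bilin ?C w ?u" by (rule bilin_sym[OF tC])
    also have "\<dots> = (\<Sum>i\<in>UNIV. w$i * (?C *v ?u)$i)" by (rule bilin_alt)
    also have "\<dots> = 0" using Cu by simp
    finally show ?thesis .
  qed
  have sym: "bilin ?C a b = bilin ?C b a" for a b by (rule bilin_sym[OF tC])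
  have o20: "bilin ?C x y = 0" if "x \<in> H20" "y \<in> H20 \<union> H11" for x y
    using pol that unfolding polarization_def by blast
  have o02: "bilin ?C x y = 0" if "x \<in> H02" "y \<in> H02 \<union> H11" for x y
    using pol that unfolding polarization_def by blast
  have p20: "Re (bilin ?C x (cconj x)) > 0" if "x \<in> H20" "x \<noteq> 0" for x
    using pol that unfolding polarization_def by blast
  have p11: "Re (bilin ?C x (cconj x)) < 0" if "x \<in> H11" "x \<noteq> 0" for x
    using pol that unfolding polarization_def by blast
  have H02: "H02 = cconj ` H20" and H11: "cconj ` H11 = H11"
    using hw unfolding hodge_weight2_def by auto
  have all: "\<forall>v. \<exists>!(x,y,z). x \<in> H20 \<and> y \<in> H11 \<and> z \<in> H02 \<and> v = x + y + z"
    using hw unfolding hodge_weight2_def by (elim conjE)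
  have E1: "\<exists>!(x,y,z). x \<in> H20 \<and> y \<in> H11 \<and> z \<in> H02 \<and> ?u = x + y + z"
    using all by (rule spec)
  from ex1_implies_ex[OF E1] obtain q where "case q of (x,y,z) \<Rightarrow> x \<in> H20 \<and> y \<in> H11 \<and> z \<in> H02 \<and> ?u = x + y + z" ..
  then obtain x y z where x: "x \<in> H20" and y: "y \<in> H11" and z: "z \<in> H02" and u: "?u = x + y + z"
    by (cases q) auto
  have cx: "cconj x \<in> H02" using x H02 by blast
  have cy: "cconj y \<in> H11" using y H11 by blast
  obtain x' where x': "x' \<in> H20" and zx: "z = cconj x'" using z H02 by blast
  have x0: "x = 0"
  proof (rule ccontr)
    assume "x \<noteq> 0"
    have "0 = bilin ?C ?u (cconj x)" using bz by simp
    also have "\<dots> = bilin ?C x (cconj x) + bilin ?C y (cconj x) + bilin ?C z (cconj x)"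
      unfolding u by (rule bilin_add3)
    also have "bilin ?C y (cconj x) = 0" using sym[of y "cconj x"] o02[of "cconj x" y] cx y by simp
    also have "bilin ?C z (cconj x) = 0" using o02[of z "cconj x"] cx z by simp
    finally have "bilin ?C x (cconj x) = 0" by simp
    thus False using p20[OF x \<open>x \<noteq> 0\<close>] by simp
  qed
  have y0: "y = 0"
  proof (rule ccontr)
    assume "y \<noteq> 0"
    have "0 = bilin ?C ?u (cconj y)" using bz by simp
    also have "\<dots> = bilin ?C x (cconj y) + bilin ?C y (cconj y) + bilin ?C z (cconj y)"
      unfolding u by (rule bilin_add3)
    also have "bilin ?C x (cconj y) = 0" using o20[of x "cconj y"] cy x by simp
    also have "bilin ?C z (cconj y) = 0" using o02[of z "cconj y"] cy z by simp
    finally have "bilin ?C y (cconj y) = 0" by simp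
    thus False using p11[OF y \<open>y \<noteq> 0\<close>] by simp
  qed
  have x'0: "x' = 0"
  proof (rule ccontr)
    assume "x' \<noteq> 0"
    have "0 = bilin ?C ?u x'" using bz by simp
    also have "\<dots> = bilin ?C x x' + bilin ?C y x' + bilin ?C z x'"
      unfolding u by (rule bilin_add3)
    also have "bilin ?C x x' = 0" using o20[of x x'] x x' by simp
    also have "bilin ?C y x' = 0" using sym[of y x'] o20[of x' y] x' y by simp
    also have "bilin ?C z x' = bilin ?C x' (cconj x')" using sym[of z x'] zx by simp
    finally have "bilin ?C x' (cconj x') = 0" by simp
    thus False using p20[OF x' \<open>x' \<noteq> 0\<close>] by simp
  qed
  have "?u = 0" using u x0 y0 zx x'0 by simp
  hence "v = 0" by (simp add: cvec_def vec_eq_iff)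
  thus False using v0 by simp
qed



theorem mainTheorem9:
  fixes d :: int and B J :: "rat^'n^'n"
    and H20 H11 H02 :: "(complex^'n) set"
  assumes "d > 1" and "squarefree d"
    and "K3_type B H20 H11 H02"
    and "J ** J = mat (of_int d)"
    and "\<forall>M. hodge_endo H20 H11 H02 M \<longleftrightarrow> (\<exists>p q :: rat. M = mat p + (\<chi> i j. q * J$i$j))"
    and "odd (CARD('n) div 2)"
  shows "totally_positive d (of_int d + sqrt (of_int d)) \<and>
         \<not> (\<exists>P :: rat^'n^'n. invertible P \<and>
              (\<forall>v w. bilin B ((mat (of_int d) + J) *v (P *v v)) (P *v w) = bilin B v w))"
proof
  show "totally_positive d (of_int d + sqrt (of_int d))" by (rule tp_part[OF assms(1)])
  show "\<not> (\<exists>P :: rat^'n^'n. invertible P \<and>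
              (\<forall>v w. bilin B ((mat (of_int d) + J) *v (P *v v)) (P *v w) = bilin B v w))"
  proof
    assume "\<exists>P :: rat^'n^'n. invertible P \<and>
              (\<forall>v w. bilin B ((mat (of_int d) + J) *v (P *v v)) (P *v w) = bilin B v w)"
    then obtain P :: "rat^'n^'n" where
      iso: "\<forall>v w. bilin B ((mat (of_int d) + J) *v (P *v v)) (P *v w) = bilin B v w" by blast
    define A where "A = mat (of_int d) + J"
    have "\<forall>v w. bilin (transpose (A ** P) ** B ** P) v w = bilin B v w"
    proof (intro allI)
      fix v w
      have "bilin (transpose (A ** P) ** B ** P) v w = bilin B ((A ** P) *v v) (P *v w)"
        by (rule bilin_mv[symmetric])
      also have "\<dots> = bilin B (A *v (P *v v)) (P *v w)" by (simp only: matrix_vector_mul_assoc)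
      also have "\<dots> = bilin B v w" using iso unfolding A_def by blast
      finally show "bilin (transpose (A ** P) ** B ** P) v w = bilin B v w" .
    qed
    hence Meq: "transpose (A ** P) ** B ** P = B" by (rule bilin_eq_mat)
    have "det (transpose (A ** P) ** B ** P) = det A * det P * det B * det P"
      by (simp only: det_mul det_transpose)
    hence "det A * det P * det B * det P = det B" using Meq by simp
    moreover have dB: "det B \<noteq> 0" by (rule K3_det[OF assms(3)])
    ultimately have H1: "det A * (det P * det P) = 1"
      by (metis mult.commute mult.left_commute mult_cancel_right1)
    have nsq: "\<not> (\<exists>r::rat. r^2 = of_int d)"
      using rat_sq_int sqfree_not_sq[OF assms(1,2)] by blast
    obtain m c where cn: "CARD('n) = 2*m" and cc: "c*c = 1"
      and dt: "\<forall>t. det (mat t + J) = c * (t*t - of_int d)^m"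
      using det_shape[OF assms(4) nsq] by blast
    have "odd m" using assms(6) cn by simp
    then obtain j where mj: "m = 2*j + 1" by (rule oddE)
    define s :: rat where "s = of_int d * of_int d - of_int d"
    have s0: "s > 0" using assms(1) unfolding s_def
      by (simp add: algebra_simps)
    define q where "q = s^j * det P"
    have dA: "det A = c * s^m" using dt unfolding A_def s_def by simp
    have H2: "c * s * (q * q) = 1"
    proof -
      have sm: "s^m = s^j * s^j * s" unfolding mj by (simp only: mult_2 power_add power_one_right)
      have eq: "c * s * (q * q) = c * s^m * (det P * det P)"
        unfolding q_def sm by (simp only: mult_ac)
      have h: "c * s^m * (det P * det P) = 1" using H1 unfolding dA .
      show ?thesis using eq h by (rule trans)
    qed
    have "c > 0"
    proof (rule ccontr)
      assume "\<not> c > 0"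
      hence c0: "c \<le> 0" by simp
      have cs: "c * s \<le> 0" using c0 s0 by (simp add: mult_nonpos_nonneg)
      have "q * q \<ge> 0" by simp
      hence "c * s * (q * q) \<le> 0" using cs by (simp add: mult_nonpos_nonneg)
      thus False using H2 by simp
    qed
    hence c1: "c = 1" using cc
      by (metis (no_types, opaque_lifting) mult_cancel_left1 mult_less_cancel_left_pos mult_right_less_imp_less
          not_less_iff_gr_or_eq)
    have q0: "q \<noteq> 0" using H2 by auto
    have "(1/q)^2 = s" using H2 c1 q0 by (simp add: field_simps power2_eq_square)
    hence "(1/q)^2 = of_int (d*(d-1))" unfolding s_def by (simp add: algebra_simps)
    hence "\<exists>k::int. d*(d-1) = k^2" by (rule rat_sq_int)
    thus False using dd1_not_sq[OF assms(1)] by blast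
  qed
qed

end
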